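(* Let $(D,\mathrm{left},\mathrm{right})$ be an interval poset, and let $\le$ be the partial order on $\max(D)$ given by $a\le b$ iff $a=\mathrm{left}(z)$ and $b=\mathrm{right}(z)$ for some $z\in D$. Let $\mathbf{I}(\max(D),\le)$ be the set of closed intervals $[a,b]=\{p\in\max(D): a\le p\le b\}$ with $a\le b$, ordered by reverse inclusion. Then $$\phi:D\to\mathbf{I}(\max(D),\le),\qquad x\mapsto[\mathrm{left}(x),\mathrm{right}(x)]$$ is an order isomorphism.
   Context: For a poset $(D,\sqsubseteq)$, $\max(D)$ is its set of maximal elements and $x\sqcap y$ denotes the infimum of $\{x,y\}$. An interval poset is a poset $D$ with two functions $\mathrm{left},\mathrm{right}:D\to\max(D)$ such that (only the infima named here are assumed to exist): (i) for all $x\in D$, $x=\mathrm{left}(x)\sqcap\mathrm{right}(x)$; (ii) for all $x,y\in D$, if $\mathrm{right}(x)=\mathrm{left}(y)$ then $x\sqcap y$ exists and $\mathrm{left}(x\sqcap y)=\mathrm{left}(x)$, $\mathrm{right}(x\sqcap y)=\mathrm{right}(y)$; (iii) for each $x\in D$ and each $p\in\max(D)$ with $x\sqsubseteq p$, the infima $\mathrm{left}(x)\sqcap p$ and $p\sqcap\mathrm{right}(x)$ exist and $\mathrm{left}(\mathrm{left}(x)\sqcap p)=\mathrm{left}(x)$, $\mathrm{right}(\mathrm{left}(x)\sqcap p)=p$, $\mathrm{left}(p\sqcap\mathrm{right}(x))=p$, $\mathrm{right}(p\sqcap\mathrm{right}(x))=\mathrm{right}(x)$. The relation $\le$ is a partial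 order on $\max(D)$. *)

theory Defs
  imports Main
begin

definition poset_on :: "'a set \<Rightarrow> ('a \<Rightarrow> 'a \<Rightarrow> bool) \<Rightarrow> bool" where
  "poset_on D le \<longleftrightarrow>
     (\<forall>x\<in>D. le x x) \<and>
     (\<forall>x\<in>D. \<forall>y\<in>D. le x y \<and> le y x \<longrightarrow> x = y) \<and>
     (\<forall>x\<in>D. \<forall>y\<in>D. \<forall>z\<in>D. le x y \<and> le y z \<longrightarrow> le x z)"

definition maxs :: "'a set \<Rightarrow> ('a \<Rightarrow> 'a \<Rightarrow> bool) \<Rightarrow> 'a set" where
  "maxs D le = {x \<in> D. \<forall>y\<in>D. le x y \<longrightarrow> y = x}"

definition is_inf :: "'a set \<Rightarrow> ('a \<Rightarrow> 'a \<Rightarrow> bool) \<Rightarrow> 'a \<Rightarrow> 'a \<Rightarrow> 'a \<Rightarrow> bool" where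
  "is_inf D le x y z \<longleftrightarrow> z \<in> D \<and> le z x \<and> le z y \<and>
     (\<forall>w\<in>D. le w x \<and> le w y \<longrightarrow> le w z)"

definition interval_poset ::
  "'a set \<Rightarrow> ('a \<Rightarrow> 'a \<Rightarrow> bool) \<Rightarrow> ('a \<Rightarrow> 'a) \<Rightarrow> ('a \<Rightarrow> 'a) \<Rightarrow> bool" where
  "interval_poset D le left right \<longleftrightarrow>
     poset_on D le \<and>
     (\<forall>x\<in>D. left x \<in> maxs D le \<and> right x \<in> maxs D le) \<and>
     (\<forall>x\<in>D. is_inf D le (left x) (right x) x) \<and>
     (\<forall>x\<in>D. \<forall>y\<in>D. right x = left y \<longrightarrow>
        (\<exists>z. is_inf D le x y z \<and> left z = left x \<and> right z = right y)) \<and>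
     (\<forall>x\<in>D. \<forall>p\<in>maxs D le. le x p \<longrightarrow>
        (\<exists>z. is_inf D le (left x) p z \<and> left z = left x \<and> right z = p) \<and>
        (\<exists>z. is_inf D le p (right x) z \<and> left z = p \<and> right z = right x))"

definition max_le :: "'a set \<Rightarrow> ('a \<Rightarrow> 'a) \<Rightarrow> ('a \<Rightarrow> 'a) \<Rightarrow> 'a \<Rightarrow> 'a \<Rightarrow> bool" where
  "max_le D left right a b \<longleftrightarrow> (\<exists>z\<in>D. a = left z \<and> b = right z)"

definition closed_interval ::
  "'a set \<Rightarrow> ('a \<Rightarrow> 'a \<Rightarrow> bool) \<Rightarrow> ('a \<Rightarrow> 'a) \<Rightarrow> ('a \<Rightarrow> 'a) \<Rightarrow> 'a \<Rightarrow> 'a \<Rightarrow> 'a set" where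
  "closed_interval D le left right a b =
     {p \<in> maxs D le. max_le D left right a p \<and> max_le D left right p b}"

definition intervals ::
  "'a set \<Rightarrow> ('a \<Rightarrow> 'a \<Rightarrow> bool) \<Rightarrow> ('a \<Rightarrow> 'a) \<Rightarrow> ('a \<Rightarrow> 'a) \<Rightarrow> 'a set set" where
  "intervals D le left right =
     {closed_interval D le left right a b | a b.
        a \<in> maxs D le \<and> b \<in> maxs D le \<and> max_le D left right a b}"

end

theory Submission
  imports Defs
begin

lemma inf_uniq:
  assumes "poset_on D le" "is_inf D le a b u" "is_inf D le a b v" shows "u = v"
proof -
  have "u \<in> D" "v \<in> D" "le u v" "le v u" using assms(2,3) unfolding is_inf_def by auto
  then show ?thesis using assms(1) unfolding poset_on_def by blast
qed

lemma key:
  assumes ip: "interval_poset D le left right" and x: "x \<in> D"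
  shows "p \<in> closed_interval D le left right (left x) (right x) \<longleftrightarrow> p \<in> maxs D le \<and> le x p"
proof
  have po: "poset_on D le" using ip unfolding interval_poset_def by blast
  assume "p \<in> closed_interval D le left right (left x) (right x)"
  then have pm: "p \<in> maxs D le" and "max_le D left right (left x) p" and "max_le D left right p (right x)"
    unfolding closed_interval_def by auto
  then obtain z w where z: "z \<in> D" "left x = left z" "p = right z"
    and w: "w \<in> D" "p = left w" "right x = right w" unfolding max_le_def by blast
  then obtain u where u: "is_inf D le z w u" "left u = left z" "right u = right w"
    using ip unfolding interval_poset_def by metis
  have uD: "u \<in> D" using u unfolding is_inf_def by blast
  have iu: "is_inf D le (left x) (right x) u" using ip uD u z w unfolding interval_poset_def by metis
  have ix: "is_inf D le (left x) (right x) x" using ip x unfolding interval_poset_def by blast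
  have "u = x" using inf_uniq[OF po iu ix] .
  have zi: "is_inf D le (left z) (right z) z" using ip z unfolding interval_poset_def by blast
  have pD: "p \<in> D" using pm unfolding maxs_def by blast
  have "le u z" using u unfolding is_inf_def by blast
  moreover have "le z p" using zi z unfolding is_inf_def by blast
  ultimately have "le u p" using po uD z pD unfolding poset_on_def by blast
  then show "p \<in> maxs D le \<and> le x p" using pm \<open>u = x\<close> by simp
next
  assume a: "p \<in> maxs D le \<and> le x p"
  then obtain z1 z2 where
    "is_inf D le (left x) p z1 \<and> left z1 = left x \<and> right z1 = p"
    "is_inf D le p (right x) z2 \<and> left z2 = p \<and> right z2 = right x"
    using ip x unfolding interval_poset_def by metis
  then have "max_le D left right (left x) p" "max_le D left right p (right x)"
    unfolding max_le_def is_inf_def by metis+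
  then show "p \<in> closed_interval D le left right (left x) (right x)"
    using a unfolding closed_interval_def by blast
qed

theorem mainTheorem8:
  fixes D :: "'a set" and le :: "'a \<Rightarrow> 'a \<Rightarrow> bool" and left right :: "'a \<Rightarrow> 'a"
  assumes "interval_poset D le left right"
  defines "\<phi> \<equiv> (\<lambda>x. closed_interval D le left right (left x) (right x))"
  shows "bij_betw \<phi> D (intervals D le left right) \<and>
         (\<forall>x\<in>D. \<forall>y\<in>D. le x y \<longleftrightarrow> \<phi> y \<subseteq> \<phi> x)"
proof -
  have po: "poset_on D le" using assms(1) unfolding interval_poset_def by blast
  have K: "\<And>x p. x \<in> D \<Longrightarrow> p \<in> \<phi> x \<longleftrightarrow> p \<in> maxs D le \<and> le x p"
    unfolding \<phi>_def using key[OF assms(1)] by blast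
  have LR: "\<And>x. x \<in> D \<Longrightarrow> left x \<in> maxs D le \<and> right x \<in> maxs D le \<and> is_inf D le (left x) (right x) x"
    using assms(1) unfolding interval_poset_def by blast
  have ord: "\<forall>x\<in>D. \<forall>y\<in>D. le x y \<longleftrightarrow> \<phi> y \<subseteq> \<phi> x"
  proof (intro ballI iffI)
    fix x y assume xy: "x \<in> D" "y \<in> D" "le x y"
    show "\<phi> y \<subseteq> \<phi> x"
    proof
      fix p assume "p \<in> \<phi> y"
      then have "p \<in> maxs D le" "le y p" using K xy by auto
      moreover have "p \<in> D" using calculation unfolding maxs_def by blast
      ultimately show "p \<in> \<phi> x" using K xy po unfolding poset_on_def by blast
    qed
  next
    fix x y assume xy: "x \<in> D" "y \<in> D" "\<phi> y \<subseteq> \<phi> x"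
    have "left y \<in> \<phi> y" "right y \<in> \<phi> y" using K LR xy unfolding is_inf_def by auto
    then have "le x (left y)" "le x (right y)" using xy K by auto
    then show "le x y" using LR xy unfolding is_inf_def by blast
  qed
  have inj: "inj_on \<phi> D"
  proof (rule inj_onI)
    fix x y assume "x \<in> D" "y \<in> D" "\<phi> x = \<phi> y"
    then have "le x y" "le y x" using ord by auto
    then show "x = y" using po \<open>x \<in> D\<close> \<open>y \<in> D\<close> unfolding poset_on_def by blast
  qed
  have img: "\<phi> ` D = intervals D le left right"
  proof
    show "\<phi> ` D \<subseteq> intervals D le left right"
      unfolding intervals_def \<phi>_def max_le_def using LR by blast
    show "intervals D le left right \<subseteq> \<phi> ` D"
      unfolding intervals_def \<phi>_def max_le_def by blast
  qed
  show ?thesis using inj img ord unfolding bij_betw_def by blast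
qed

end
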